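(* Let $\lambda\ge0$ and $1\le n\le\lambda+1$ be integers, and let $I_n$ be the set of sequences $(k_0,\ldots,k_a)$ of non-negative integers with $\sum_{j=0}^ak_j=n$ and $\sum_{j=0}^ajk_j=n$. Then $$w_{n,\lambda}(Y)=\sum_{(k_0,\ldots,k_a)\in I_n}q_{(k_0,\ldots,k_a)}\prod_{j=0}^a\big(U^{(j)}(Y)\big)^{k_j}$$ for some $q_{(k_0,\ldots,k_a)}\in\mathbb{Q}_+$.
   Context: Let $a\ge2$ be an integer, $R$ a $\mathbb{Q}$-algebra, $u_0,\ldots,u_a\in R$, and $U(Y)=\sum_{j=0}^au_jY^j\in R[Y]$, with $U^{(j)}$ its $j$-th derivative in $Y$. $\mathbb{Q}_+$ denotes the positive rationals. For each integer $\lambda\ge0$ define polynomials $w_{n,\lambda}(Y)\in R[Y]$ recursively by $w_{0,\lambda}(Y)=1/(\lambda+1)$ and $w_{n,\lambda}(Y)=(\lambda-n+2)U'(Y)w_{n-1,\lambda}(Y)+U(Y)w_{n-1,\lambda}'(Y)$ for $n\ge1$. *)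

theory Defs
  imports "HOL-Computational_Algebra.Polynomial"
begin

definition Q_algebra :: "'a::comm_ring_1 itself \<Rightarrow> bool" where
  "Q_algebra _ \<longleftrightarrow> (\<forall>n::nat. n > 0 \<longrightarrow> (\<exists>y::'a. of_nat n * y = 1))"

text \<open>The structure map Q -> R of a Q-algebra (inverses are unique in a commutative ring).\<close>
definition rat_to :: "rat \<Rightarrow> 'a::comm_ring_1" where
  "rat_to q = (case quotient_of q of (p, d) \<Rightarrow> of_int p * (THE y::'a. of_int d * y = 1))"

text \<open>Formal derivative in Y over an arbitrary commutative ring
  (the library's pder requires no zero divisors).\<close>
definition pder :: "'a::comm_ring_1 poly \<Rightarrow> 'a poly" where
  "pder p = (\<Sum>i\<le>degree p. monom (of_nat i * coeff p i) (i - 1))"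

fun w :: "'a::comm_ring_1 poly \<Rightarrow> nat \<Rightarrow> nat \<Rightarrow> 'a poly" where
  "w U lam 0 = [: rat_to (1 / of_nat (lam + 1)) :]"
| "w U lam (Suc n) =
     smult (of_int (int lam - int (Suc n) + 2)) (pder U * w U lam n) + U * pder (w U lam n)"

text \<open>I_n: sequences (k_0,...,k_a), represented as functions nat => nat vanishing beyond a.\<close>
definition I_set :: "nat \<Rightarrow> nat \<Rightarrow> (nat \<Rightarrow> nat) set" where
  "I_set a n = {k. (\<forall>j>a. k j = 0) \<and> (\<Sum>j\<le>a. k j) = n \<and> (\<Sum>j\<le>a. j * k j) = n}"

end

theory Submission
  imports Defs
begin


lemma coeff_pder: "coeff (pder p) n = of_nat (Suc n) * coeff p (Suc n)"
proof -
  have "coeff (pder p) n = (\<Sum>i\<le>degree p. if i - 1 = n then of_nat i * coeff p i else 0)"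
    by (simp add: pder_def coeff_sum coeff_monom)
  also have "\<dots> = (\<Sum>i\<le>degree p. if i = Suc n then of_nat i * coeff p i else 0)"
    by (rule sum.cong) (auto split: nat.splits simp: diff_Suc)
  also have "\<dots> = of_nat (Suc n) * coeff p (Suc n)"
    by (auto simp: coeff_eq_0)
  finally show ?thesis .
qed

lemma pder_pCons: "pder (pCons a p) = p + pCons 0 (pder p)"
  by (rule poly_eqI) (auto simp: coeff_pder coeff_pCons algebra_simps split: nat.split)

lemma pder_add: "pder (p + q) = pder p + pder q"
  by (rule poly_eqI) (simp add: coeff_pder algebra_simps)

lemma pder_smult: "pder (smult a p) = smult a (pder p)"
  by (rule poly_eqI) (simp add: coeff_pder algebra_simps)

lemma pder_0[simp]: "pder 0 = 0"
  by (rule poly_eqI) (simp add: coeff_pder)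

lemma pder_const[simp]: "pder [:c:] = 0"
  by (rule poly_eqI) (simp add: coeff_pder)

lemma pder_mult: "pder (p * q) = p * pder q + q * pder p"
  by (induct p) (auto simp: pder_add pder_smult pder_pCons algebra_simps)

lemma pder_power_Suc: "pder (p ^ Suc n) = of_nat (Suc n) * p ^ n * pder p"
proof (induction n)
  case (Suc n)
  then show ?case
    by (simp add: pder_mult algebra_simps)
qed (simp add: pder_mult)

lemma pder_sum: "pder (sum f A) = (\<Sum>x\<in>A. pder (f x))"
  by (induct A rule: infinite_finite_induct) (auto simp: pder_add)

lemma pder_deg0: "degree p = 0 \<Longrightarrow> pder p = 0"
  by (rule poly_eqI) (simp add: coeff_pder coeff_eq_0)

lemma degree_pder: "degree (pder p) \<le> degree p - 1"
  by (rule degree_le) (simp add: coeff_pder coeff_eq_0)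

lemma degree_pder_pow: "degree ((pder ^^ m) p) \<le> degree p - m"
proof (induction m)
  case (Suc m)
  then show ?case using degree_pder[of "(pder ^^ m) p"] by simp
qed simp

lemma pder_pow_vanish: "degree p \<le> a \<Longrightarrow> (pder ^^ Suc a) p = 0"
  using degree_pder_pow[of a p] by (simp add: pder_deg0)



definition invR :: "int \<Rightarrow> 'a::comm_ring_1" where "invR d = (THE y. of_int d * y = 1)"

lemma invR:
  assumes Q: "Q_algebra TYPE('a::comm_ring_1)" and d: "d > 0"
  shows "of_int d * (invR d :: 'a) = 1"
proof -
  have "nat d > 0" using d by simp
  with Q obtain y :: 'a where y: "of_nat (nat d) * y = 1" unfolding Q_algebra_def by blast
  hence y': "of_int d * y = 1" using d by simp
  have "\<exists>!y::'a. of_int d * y = 1"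
  proof (rule ex1I[of _ y])
    fix z :: 'a assume "of_int d * z = 1"
    hence "z = z * (of_int d * y)" using y' by simp
    also have "\<dots> = (of_int d * z) * y" by (simp add: algebra_simps)
    finally show "z = y" using \<open>of_int d * z = 1\<close> by simp
  qed (rule y')
  thus ?thesis unfolding invR_def by (rule theI')
qed

lemma rat_to_div:
  assumes Q: "Q_algebra TYPE('a::comm_ring_1)" and d: "d > 0"
  shows "(rat_to (of_int p / of_int d) :: 'a) = of_int p * invR d"
proof -
  obtain p' d' where qo: "quotient_of (of_int p / of_int d) = (p', d')" by (cases "quotient_of (of_int p / of_int d)")
  have d': "d' > 0" using quotient_of_denom_pos[OF qo] .
  have eq: "(of_int p / of_int d :: rat) = of_int p' / of_int d'" using quotient_of_div[OF qo] .
  hence "(of_int (p * d') :: rat) = of_int (p' * d)" using d d' by (simp add: field_simps)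
  hence pd: "p * d' = p' * d" by (simp only: of_int_eq_iff)
  have i1: "of_int d * (invR d :: 'a) = 1" using invR[OF Q d] .
  have i2: "of_int d' * (invR d' :: 'a) = 1" using invR[OF Q d'] .
  have "(of_int p' * invR d' :: 'a) = of_int p' * invR d' * (of_int d * invR d)" using i1 by simp
  also have "\<dots> = of_int (p' * d) * invR d' * invR d" by (simp add: algebra_simps)
  also have "\<dots> = of_int (p * d') * invR d' * invR d" by (simp add: pd)
  also have "\<dots> = of_int p * invR d * (of_int d' * invR d')" by (simp add: algebra_simps)
  also have "\<dots> = of_int p * invR d" using i2 by simp
  finally show ?thesis by (simp add: rat_to_def qo invR_def)
qed

lemma rat_rep: fixes r :: rat obtains p d where "d > 0" "r = of_int p / of_int d"
proof -
  obtain p d where qo: "quotient_of r = (p, d)" by (cases "quotient_of r")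
  show ?thesis using that quotient_of_denom_pos[OF qo] quotient_of_div[OF qo] by blast
qed

lemma invR_mult:
  assumes Q: "Q_algebra TYPE('a::comm_ring_1)" and d: "d > 0" "e > 0"
  shows "(invR (d * e) :: 'a) = invR d * invR e"
proof -
  have i1: "of_int d * (invR d :: 'a) = 1" using invR[OF Q d(1)] .
  have i2: "of_int e * (invR e :: 'a) = 1" using invR[OF Q d(2)] .
  have i3: "of_int (d*e) * (invR (d*e) :: 'a) = 1" using invR[OF Q mult_pos_pos[OF d]] by simp
  have "(invR (d * e) :: 'a) = invR (d*e) * (of_int d * invR d) * (of_int e * invR e)" using i1 i2 by simp
  also have "\<dots> = (of_int (d*e) * invR (d*e)) * invR d * invR e" by (simp add: algebra_simps)
  also have "\<dots> = invR d * invR e" using i3 by simp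
  finally show ?thesis .
qed

lemma rat_to_add:
  assumes Q: "Q_algebra TYPE('a::comm_ring_1)"
  shows "(rat_to (x + y) :: 'a) = rat_to x + rat_to y"
proof -
  obtain p d where pd: "d > 0" "x = of_int p / of_int d" by (rule rat_rep)
  obtain p' d' where pd': "d' > 0" "y = of_int p' / of_int d'" by (rule rat_rep)
  have e: "x + y = of_int (p * d' + p' * d) / of_int (d * d')" using pd pd' by (simp add: field_simps)
  have "(rat_to (x + y) :: 'a) = of_int (p * d' + p' * d) * invR (d * d')"
    unfolding e by (rule rat_to_div[OF Q mult_pos_pos[OF pd(1) pd'(1)]])
  also have "\<dots> = of_int p * invR d * (of_int d' * invR d') + of_int p' * invR d' * (of_int d * invR d)"
    using invR_mult[OF Q pd(1) pd'(1)] by (simp add: algebra_simps)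
  also have "\<dots> = rat_to x + rat_to y" using invR[OF Q pd(1)] invR[OF Q pd'(1)] rat_to_div[OF Q] pd pd' by simp
  finally show ?thesis .
qed

lemma rat_to_mult:
  assumes Q: "Q_algebra TYPE('a::comm_ring_1)"
  shows "(rat_to (x * y) :: 'a) = rat_to x * rat_to y"
proof -
  obtain p d where pd: "d > 0" "x = of_int p / of_int d" by (rule rat_rep)
  obtain p' d' where pd': "d' > 0" "y = of_int p' / of_int d'" by (rule rat_rep)
  have e: "x * y = of_int (p * p') / of_int (d * d')" unfolding pd(2) pd'(2) by simp
  have "(rat_to (x * y) :: 'a) = of_int (p * p') * invR (d * d')"
    unfolding e by (rule rat_to_div[OF Q mult_pos_pos[OF pd(1) pd'(1)]])
  also have "\<dots> = (of_int p * invR d) * (of_int p' * invR d')"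
    using invR_mult[OF Q pd(1) pd'(1)] by (simp add: algebra_simps)
  also have "\<dots> = rat_to x * rat_to y" using rat_to_div[OF Q] pd pd' by simp
  finally show ?thesis .
qed

lemma rat_to_of_int:
  assumes Q: "Q_algebra TYPE('a::comm_ring_1)"
  shows "(rat_to (of_int m) :: 'a) = of_int m"
proof -
  have "(rat_to (of_int m / of_int 1) :: 'a) = of_int m * invR 1" by (rule rat_to_div[OF Q]) simp
  moreover have "of_int 1 * (invR 1 :: 'a) = 1" by (rule invR[OF Q]) simp
  ultimately show ?thesis by simp
qed

lemma rat_to_of_nat:
  assumes Q: "Q_algebra TYPE('a::comm_ring_1)"
  shows "(rat_to (of_nat m) :: 'a) = of_nat m"
  using rat_to_of_int[OF Q, of "int m"] by simp



definition M :: "'a::comm_ring_1 poly \<Rightarrow> nat \<Rightarrow> (nat \<Rightarrow> nat) \<Rightarrow> 'a poly" where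
  "M U a k = (\<Prod>j\<le>a. ((pder ^^ j) U) ^ (k j))"

definition addk :: "nat \<Rightarrow> (nat \<Rightarrow> nat) \<Rightarrow> nat \<Rightarrow> nat" where
  "addk m k = (\<lambda>i. if i = m then Suc (k i) else k i)"
definition subk :: "nat \<Rightarrow> (nat \<Rightarrow> nat) \<Rightarrow> nat \<Rightarrow> nat" where
  "subk m k = (\<lambda>i. if i = m then k i - 1 else k i)"

lemma addk_subk: "0 < k m \<Longrightarrow> addk m (subk m k) = k"
  by (auto simp: addk_def subk_def)
lemma subk_addk: "subk m (addk m k) = k"
  by (auto simp: addk_def subk_def)

lemma M_addk:
  assumes "m \<le> a" shows "M U a (addk m k) = (pder ^^ m) U * M U a k"
proof -
  have "M U a (addk m k) = (\<Prod>j\<le>a. (if j = m then (pder ^^ j) U else 1) * ((pder ^^ j) U) ^ (k j))"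
    unfolding M_def addk_def by (rule prod.cong) auto
  also have "\<dots> = (\<Prod>j\<le>a. (if j = m then (pder ^^ j) U else 1)) * M U a k"
    unfolding M_def by (rule prod.distrib)
  also have "\<dots> = (pder ^^ m) U * M U a k" using assms by (simp add: prod.delta)
  finally show ?thesis .
qed

lemma M_zero: "M U a (\<lambda>_. 0) = 1" by (simp add: M_def)

lemma sum_addk:
  assumes "m \<le> a"
  shows "(\<Sum>j\<le>a. addk m k j) = (\<Sum>j\<le>a. k j) + 1"
    and "(\<Sum>j\<le>a. j * addk m k j) = (\<Sum>j\<le>a. j * k j) + m"
proof -
  have "(\<Sum>j\<le>a. addk m k j) = (\<Sum>j\<le>a. k j + (if j = m then 1 else 0))"
    by (rule sum.cong) (auto simp: addk_def)
  thus "(\<Sum>j\<le>a. addk m k j) = (\<Sum>j\<le>a. k j) + 1" using assms by (simp add: sum.distrib)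
  have "(\<Sum>j\<le>a. j * addk m k j) = (\<Sum>j\<le>a. j * k j + (if j = m then m else 0))"
    by (rule sum.cong) (auto simp: addk_def)
  thus "(\<Sum>j\<le>a. j * addk m k j) = (\<Sum>j\<le>a. j * k j) + m" using assms by (simp add: sum.distrib)
qed

lemma pder_one[simp]: "pder 1 = 0"
  using pder_const[of 1] by (simp add: one_pCons)

lemma pder_pow: "pder (p ^ n) = of_nat n * p ^ (n - 1) * pder p"
  by (cases n) (simp_all add: pder_power_Suc del: power_Suc)

lemma pder_prod: "pder (prod f S) = (\<Sum>a\<in>S. prod f (S - {a}) * pder (f a))"
proof (induct S rule: infinite_finite_induct)
  case (insert a as)
  then have id: "prod f (insert a as) = f a * prod f as"
    "\<And>g. sum g (insert a as) = g a + sum g as"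
    "insert a as - {a} = as"
    by auto
  have "prod f (insert a as - {b}) = f a * prod f (as - {b})" if "b \<in> as" for b
  proof -
    from \<open>a \<notin> as\<close> that have *: "insert a as - {b} = insert a (as - {b})"
      by auto
    show ?thesis
      unfolding * by (subst prod.insert) (use insert in auto)
  qed
  then show ?case
    unfolding id pder_mult insert(3) sum_distrib_left
    by (auto simp add: ac_simps intro!: sum.cong)
qed auto

lemma pder_M:
  assumes "degree U \<le> a"
  shows "pder (M U a k) = (\<Sum>j\<in>{j. j < a \<and> 0 < k j}. smult (of_nat (k j)) ((pder ^^ Suc j) U * M U a (subk j k)))"
proof -
  let ?f = "\<lambda>j. ((pder ^^ j) U) ^ (k j)"
  have "pder (M U a k) = (\<Sum>j\<le>a. prod ?f ({..a} - {j}) * pder (?f j))"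
    unfolding M_def by (rule pder_prod)
  also have "\<dots> = (\<Sum>j\<le>a. smult (of_nat (k j)) ((pder ^^ Suc j) U * M U a (subk j k)))"
  proof (rule sum.cong[OF refl])
    fix j assume j: "j \<in> {..a}"
    have r: "M U a (subk j k) = ((pder ^^ j) U) ^ (k j - 1) * prod ?f ({..a} - {j})"
    proof -
      have "M U a (subk j k) = ((pder ^^ j) U) ^ (subk j k j) * (\<Prod>i\<in>{..a} - {j}. ((pder ^^ i) U) ^ (subk j k i))"
        unfolding M_def using j by (simp add: prod.remove)
      also have "(\<Prod>i\<in>{..a} - {j}. ((pder ^^ i) U) ^ (subk j k i)) = prod ?f ({..a} - {j})"
        by (rule prod.cong) (auto simp: subk_def)
      finally show ?thesis by (simp add: subk_def)
    qed
    show "prod ?f ({..a} - {j}) * pder (?f j) = smult (of_nat (k j)) ((pder ^^ Suc j) U * M U a (subk j k))"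
      unfolding r pder_pow funpow.simps o_def by (simp add: of_nat_poly mult_ac)
  qed
  also have "\<dots> = (\<Sum>j\<in>{j. j < a \<and> 0 < k j}. smult (of_nat (k j)) ((pder ^^ Suc j) U * M U a (subk j k)))"
  proof (rule sum.mono_neutral_right)
    show "\<forall>i\<in>{..a} - {j. j < a \<and> 0 < k j}. smult (of_nat (k i)) ((pder ^^ Suc i) U * M U a (subk i k)) = 0"
    proof
      fix i assume "i \<in> {..a} - {j. j < a \<and> 0 < k j}"
      hence "i = a \<or> k i = 0" by auto
      thus "smult (of_nat (k i)) ((pder ^^ Suc i) U * M U a (subk i k)) = 0"
        using pder_pow_vanish[OF assms] by auto
    qed
  qed auto
  finally show ?thesis .
qed



definition ev :: "'a::comm_ring_1 poly \<Rightarrow> nat \<Rightarrow> (rat \<times> (nat \<Rightarrow> nat)) list \<Rightarrow> 'a poly" where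
  "ev U a L = sum_list (map (\<lambda>(c, k). smult (rat_to c) (M U a k)) L)"

lemma ev_simps[simp]: "ev U a [] = 0" "ev U a ((c,k) # L) = smult (rat_to c) (M U a k) + ev U a L"
  "ev U a (L1 @ L2) = ev U a L1 + ev U a L2"
  by (simp_all add: ev_def)

lemma ev_concat: "ev U a (concat Ls) = sum_list (map (ev U a) Ls)"
  by (induct Ls) simp_all

definition fstep :: "rat \<Rightarrow> rat \<times> (nat \<Rightarrow> nat) \<Rightarrow> rat \<times> (nat \<Rightarrow> nat)" where
  "fstep c0 p = (c0 * fst p, addk 1 (snd p))"

definition gstep :: "nat \<Rightarrow> rat \<times> (nat \<Rightarrow> nat) \<Rightarrow> (rat \<times> (nat \<Rightarrow> nat)) list" where
  "gstep a p = map (\<lambda>j. (fst p * of_nat (snd p j), addk 0 (addk (Suc j) (subk j (snd p)))))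
      (filter (\<lambda>j. 0 < snd p j) [0..<a])"

definition stepL where "stepL a c0 L = map (fstep c0) L @ concat (map (gstep a) L)"

lemma smult_sum_right: "smult c (sum f S) = (\<Sum>i\<in>S. smult c (f i))"
  by (induct S rule: infinite_finite_induct) (simp_all add: smult_add_right)

lemma ev_fstep:
  assumes Q: "Q_algebra TYPE('a::comm_ring_1)" and a: "1 \<le> a"
  shows "ev (U :: 'a poly) a (map (fstep c0) L) = smult (rat_to c0) (pder U * ev U a L)"
proof (induct L)
  case (Cons p L)
  obtain c k where p: "p = (c, k)" by (cases p)
  have m: "M U a (addk (Suc 0) k) = pder U * M U a k" using M_addk[OF a] by simp
  show ?case using Cons unfolding p
    by (simp add: fstep_def m rat_to_mult[OF Q] algebra_simps smult_add_right)
qed simp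

lemma ev_gstep1:
  assumes Q: "Q_algebra TYPE('a::comm_ring_1)" and a: "degree U \<le> a"
  shows "ev (U :: 'a poly) a (gstep a (c, k)) = U * pder (smult (rat_to c) (M U a k))"
proof -
  have "ev U a (gstep a (c, k)) = (\<Sum>j\<in>{j. j < a \<and> 0 < k j}. smult (rat_to c) (smult (of_nat (k j)) (U * ((pder ^^ Suc j) U * M U a (subk j k)))))"
  proof -
    have d: "distinct (filter (\<lambda>j. 0 < k j) [0..<a])" by simp
    have s: "set (filter (\<lambda>j. 0 < k j) [0..<a]) = {j. j < a \<and> 0 < k j}" by auto
    show ?thesis unfolding ev_def gstep_def
      apply (simp add: o_def)
      apply (subst sum_list_distinct_conv_sum_set[OF d])
      unfolding s
      apply (rule sum.cong[OF refl])
      apply (simp add: rat_to_mult[OF Q] rat_to_of_nat[OF Q] M_addk)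
      done
  qed
  also have "\<dots> = U * pder (smult (rat_to c) (M U a k))"
    unfolding pder_smult pder_M[OF a] by (simp add: sum_distrib_left smult_sum_right mult_ac)
  finally show ?thesis .
qed

lemma ev_gstep:
  assumes Q: "Q_algebra TYPE('a::comm_ring_1)" and a: "degree U \<le> a"
  shows "ev (U :: 'a poly) a (concat (map (gstep a) L)) = U * pder (ev U a L)"
proof (induct L)
  case (Cons p L)
  obtain c k where p: "p = (c, k)" by (cases p)
  show ?case using Cons ev_gstep1[OF Q a, of c k] unfolding p
    by (simp add: ev_concat pder_add algebra_simps)
qed simp

lemma ev_stepL:
  assumes Q: "Q_algebra TYPE('a::comm_ring_1)" and a: "degree U \<le> a" "1 \<le> a"
  shows "ev (U :: 'a poly) a (stepL a c0 L) = smult (rat_to c0) (pder U * ev U a L) + U * pder (ev U a L)"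
  unfolding stepL_def using ev_fstep[OF Q a(2)] ev_gstep[OF Q a(1)] by simp

definition qL :: "(rat \<times> (nat \<Rightarrow> nat)) list \<Rightarrow> (nat \<Rightarrow> nat) \<Rightarrow> rat" where
  "qL L k = sum_list (map fst (filter (\<lambda>p. snd p = k) L))"

lemma collapse:
  assumes Q: "Q_algebra TYPE('a::comm_ring_1)" and fin: "finite I"
  shows "(\<forall>p\<in>set L. snd p \<in> I) \<Longrightarrow> ev (U :: 'a poly) a L = (\<Sum>k\<in>I. smult (rat_to (qL L k)) (M U a k))"
proof (induct L)
  case Nil
  have "rat_to 0 = (0::'a)" using rat_to_of_int[OF Q, of 0] by simp
  then show ?case by (simp add: qL_def)
next
  case (Cons p L)
  obtain c k0 where p: "p = (c, k0)" by (cases p)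
  have k0: "k0 \<in> I" using Cons.prems p by auto
  have z: "rat_to 0 = (0::'a)" using rat_to_of_int[OF Q, of 0] by simp
  have q: "qL (p # L) k = (if k = k0 then c else 0) + qL L k" for k
    unfolding p qL_def by simp
  have "(\<Sum>k\<in>I. smult (rat_to (qL (p # L) k)) (M U a k)) =
        (\<Sum>k\<in>I. smult (rat_to (if k = k0 then c else 0)) (M U a k)) + (\<Sum>k\<in>I. smult (rat_to (qL L k)) (M U a k))"
    unfolding q rat_to_add[OF Q] smult_add_left sum.distrib ..
  also have "(\<Sum>k\<in>I. smult (rat_to (if k = k0 then c else 0)) (M U a k)) = (\<Sum>k\<in>I. if k = k0 then smult (rat_to c) (M U a k) else 0)"
    by (rule sum.cong) (auto simp: z)
  also have "\<dots> = smult (rat_to c) (M U a k0)" using fin k0 by (simp add: sum.delta)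
  finally show ?case using Cons p by simp
qed

lemma qL_pos: "(\<forall>p\<in>set L. fst p \<ge> 0) \<Longrightarrow> (c, k) \<in> set L \<Longrightarrow> c > 0 \<Longrightarrow> qL L k > 0"
proof (induct L)
  case (Cons p L)
  have nn: "qL L k \<ge> 0" for k unfolding qL_def using Cons.prems(1)
    by (intro sum_list_nonneg) auto
  show ?case
  proof (cases "p = (c, k)")
    case True
    then show ?thesis using Cons.prems nn[of k] by (simp add: qL_def)
  next
    case False
    then have "qL L k > 0" using Cons by auto
    moreover have "qL (p # L) k = (if snd p = k then fst p else 0) + qL L k" by (simp add: qL_def)
    ultimately show ?thesis using Cons.prems(1) by auto
  qed
qed simp



abbreviation S where "S a k \<equiv> (\<Sum>j\<le>a. k j)"
abbreviation W where "W a k \<equiv> (\<Sum>j\<le>a. j * k j)"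

lemma I_mem: "k \<in> I_set a n \<longleftrightarrow> (\<forall>j>a. k j = 0) \<and> S a k = n \<and> W a k = n"
  by (simp add: I_set_def)

lemma sum_subk:
  assumes "m \<le> a" "0 < k m"
  shows "S a k = S a (subk m k) + 1" "W a k = W a (subk m k) + m"
  using sum_addk[OF assms(1), of "subk m k"] addk_subk[of k m, OF assms(2)] by simp_all

lemma finite_I: "finite (I_set a n)"
proof (rule finite_subset)
  show "I_set a n \<subseteq> {f. \<forall>x. (x \<in> {..a} \<longrightarrow> f x \<in> {..n}) \<and> (x \<notin> {..a} \<longrightarrow> f x = 0)}"
  proof (intro subsetI CollectI allI conjI impI)
    fix k x assume k: "k \<in> I_set a n" and x: "x \<in> {..a}"
    have "k x \<le> S a k" using x by (intro member_le_sum) auto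
    thus "k x \<in> {..n}" using k by (simp add: I_mem)
  next
    fix k x assume "k \<in> I_set a n" "x \<notin> {..a}"
    thus "k x = 0" by (simp add: I_mem)
  qed
qed (rule finite_set_of_finite_funs; simp)

lemma fstep_mem:
  assumes "1 \<le> a" "k \<in> I_set a n"
  shows "addk 1 k \<in> I_set a (Suc n)"
  using assms sum_addk[OF assms(1), of k] unfolding I_mem by (auto simp: addk_def)

lemma gstep_mem:
  assumes "j < a" "0 < k j" "k \<in> I_set a n"
  shows "addk 0 (addk (Suc j) (subk j k)) \<in> I_set a (Suc n)"
proof -
  let ?k1 = "subk j k" let ?k2 = "addk (Suc j) ?k1" let ?k3 = "addk 0 ?k2"
  have e1: "S a k = S a ?k1 + 1" "W a k = W a ?k1 + j" using sum_subk[of j a k] assms by auto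
  have e2: "S a ?k2 = S a ?k1 + 1" "W a ?k2 = W a ?k1 + Suc j" using sum_addk[of "Suc j" a ?k1] assms by auto
  have e3: "S a ?k3 = S a ?k2 + 1" "W a ?k3 = W a ?k2" using sum_addk[of 0 a ?k2] assms by auto
  have v: "\<forall>i>a. ?k3 i = 0" using assms unfolding I_mem by (auto simp: addk_def subk_def)
  show ?thesis unfolding I_mem using v e1 e2 e3 assms(3) unfolding I_mem by simp
qed

lemma stepL_mem:
  assumes "1 \<le> a" "c0 \<ge> 0" "\<forall>p\<in>set L. fst p \<ge> 0 \<and> snd p \<in> I_set a n"
  shows "\<forall>p\<in>set (stepL a c0 L). fst p \<ge> 0 \<and> snd p \<in> I_set a (Suc n)"
  using assms fstep_mem[OF assms(1)] gstep_mem
  by (auto simp: stepL_def fstep_def gstep_def)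

lemma cover:
  assumes a: "1 \<le> a" and c0: "c0 > 0" and cov: "\<forall>k\<in>I_set a n. \<exists>c>0. (c, k) \<in> set L"
    and k': "k' \<in> I_set a (Suc n)"
  shows "\<exists>c>0. (c, k') \<in> set (stepL a c0 L)"
proof (cases "0 < k' 1")
  case True
  let ?k = "subk 1 k'"
  have e: "S a k' = S a ?k + 1" "W a k' = W a ?k + 1" using sum_subk[of 1 a k', OF a True] by auto
  have "?k \<in> I_set a n" using k' e unfolding I_mem by (auto simp: subk_def)
  then obtain c where c: "c > 0" "(c, ?k) \<in> set L" using cov by blast
  have "fstep c0 (c, ?k) \<in> set (stepL a c0 L)" using c unfolding stepL_def by auto
  moreover have "fstep c0 (c, ?k) = (c0 * c, k')" unfolding fstep_def using addk_subk[of k' 1, OF True] by simp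
  ultimately have m: "(c0 * c, k') \<in> set (stepL a c0 L)" by simp
  have "c0 * c > 0" using c c0 by simp
  with m show ?thesis by blast
next
  case False
  hence k1: "k' 1 = 0" by simp
  have kv: "\<forall>j>a. k' j = 0" "S a k' = Suc n" "W a k' = Suc n" using k' by (auto simp: I_mem)
  obtain j0 where j0: "j0 \<le> a" "j0 * k' j0 \<noteq> 0"
  proof -
    have "\<exists>j0\<in>{..a}. j0 * k' j0 \<noteq> 0"
    proof (rule ccontr)
      assume "\<not> (\<exists>j0\<in>{..a}. j0 * k' j0 \<noteq> 0)"
      hence "W a k' = 0" by (intro sum.neutral) auto
      thus False using kv by simp
    qed
    thus ?thesis using that by auto
  qed
  have "j0 \<noteq> 0" "k' j0 \<noteq> 0" using j0(2) by auto
  moreover have "j0 \<noteq> 1" using k1 j0(2) by auto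
  ultimately have j0': "2 \<le> j0" "0 < k' j0" by auto
  have k0: "0 < k' 0"
  proof (rule ccontr)
    assume "\<not> 0 < k' 0"
    hence z: "k' 0 = 0" by simp
    have "S a k' < W a k'"
    proof (rule sum_strict_mono_ex1)
      show "\<forall>x\<in>{..a}. k' x \<le> x * k' x"
      proof
        fix x assume "x \<in> {..a}"
        show "k' x \<le> x * k' x" using z by (cases x) auto
      qed
      show "\<exists>x\<in>{..a}. k' x < x * k' x" using j0 j0' by (intro bexI[of _ j0]) auto
    qed simp
    thus False using kv by simp
  qed
  define j where "j = j0 - 1"
  have jj: "j0 = Suc j" "j < a" "j \<noteq> 0" using j0 j0' unfolding j_def by auto
  let ?k1 = "subk 0 k'" let ?k2 = "subk j0 ?k1" let ?k = "addk j ?k2"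
  have k1j0: "0 < ?k1 j0" using j0' by (simp add: subk_def)
  have e1: "S a k' = S a ?k1 + 1" "W a k' = W a ?k1 + 0" using sum_subk[of 0 a k'] k0 by auto
  have e2: "S a ?k1 = S a ?k2 + 1" "W a ?k1 = W a ?k2 + j0" using sum_subk[of j0 a ?k1] k1j0 j0 by auto
  have e3: "S a ?k = S a ?k2 + 1" "W a ?k = W a ?k2 + j" using sum_addk[of j a ?k2] jj by auto
  have vk: "\<forall>i>a. ?k i = 0" using kv jj j0 by (auto simp: addk_def subk_def)
  have kI: "?k \<in> I_set a n" unfolding I_mem using vk kv e1 e2 e3 jj by simp
  then obtain c where c: "c > 0" "(c, ?k) \<in> set L" using cov by blast
  have kj: "0 < ?k j" by (simp add: addk_def)
  have eq: "addk 0 (addk (Suc j) (subk j ?k)) = k'"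
    unfolding subk_addk jj(1)[symmetric] addk_subk[of ?k1 j0, OF k1j0] addk_subk[of k' 0, OF k0] ..
  have "(c * of_nat (?k j), addk 0 (addk (Suc j) (subk j ?k))) \<in> set (gstep a (c, ?k))"
    unfolding gstep_def using jj kj by auto
  hence "(c * of_nat (?k j), k') \<in> set (gstep a (c, ?k))" unfolding eq .
  hence "(c * of_nat (?k j), k') \<in> set (stepL a c0 L)" using c(2) unfolding stepL_def by auto
  moreover have "c * of_nat (?k j) > 0" using c kj by simp
  ultimately show ?thesis by blast
qed



lemma I_zero: "I_set a 0 = {\<lambda>_. 0}"
proof -
  have "k = (\<lambda>_. 0)" if "k \<in> I_set a 0" for k
  proof
    fix x
    show "k x = 0"
    proof (cases "x \<le> a")
      case True
      have "k x \<le> S a k" using True by (intro member_le_sum) auto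
      thus ?thesis using that by (simp add: I_mem)
    qed (use that in \<open>simp add: I_mem\<close>)
  qed
  thus ?thesis by (auto simp: I_mem)
qed

lemma main_ind:
  fixes U :: "'a::comm_ring_1 poly"
  assumes Q: "Q_algebra TYPE('a)" and a: "1 \<le> a" "degree U \<le> a"
  shows "n \<le> lam + 1 \<Longrightarrow> \<exists>L. ev U a L = w U lam n \<and> (\<forall>p\<in>set L. fst p \<ge> 0 \<and> snd p \<in> I_set a n)
            \<and> (\<forall>k\<in>I_set a n. \<exists>c>0. (c, k) \<in> set L)"
proof (induct n)
  case 0
  let ?c = "1 / of_nat (lam + 1) :: rat"
  have "ev U a [(?c, \<lambda>_. 0)] = w U lam 0" by (simp add: M_zero)
  moreover have "?c > 0" by simp
  ultimately show ?case unfolding I_zero by (intro exI[of _ "[(?c, \<lambda>_. 0)]"]) auto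
next
  case (Suc n)
  then obtain L where L: "ev U a L = w U lam n" "\<forall>p\<in>set L. fst p \<ge> 0 \<and> snd p \<in> I_set a n"
    "\<forall>k\<in>I_set a n. \<exists>c>0. (c, k) \<in> set L" by auto
  define m where "m = int lam - int (Suc n) + 2"
  define c0 where "c0 = (of_int m :: rat)"
  have c0: "c0 > 0" using Suc.prems unfolding c0_def m_def by simp
  have r: "rat_to c0 = (of_int m :: 'a)" unfolding c0_def by (rule rat_to_of_int[OF Q])
  have "ev U a (stepL a c0 L) = w U lam (Suc n)"
    by (simp only: ev_stepL[OF Q a(2) a(1)] L(1) r w.simps m_def)
  moreover have "\<forall>p\<in>set (stepL a c0 L). fst p \<ge> 0 \<and> snd p \<in> I_set a (Suc n)"
    using stepL_mem[OF a(1) _ L(2), of c0] c0 by simp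
  moreover have "\<forall>k\<in>I_set a (Suc n). \<exists>c>0. (c, k) \<in> set (stepL a c0 L)"
    using cover[OF a(1) c0 L(3)] by blast
  ultimately show ?case by blast
qed

theorem mainTheorem6:
  fixes U :: "'a::comm_ring_1 poly" and a lam n :: nat
  assumes "Q_algebra TYPE('a)"
    and "a \<ge> 2"
    and "degree U \<le> a"
    and "1 \<le> n" and "n \<le> lam + 1"
  shows "\<exists>q :: (nat \<Rightarrow> nat) \<Rightarrow> rat. (\<forall>k\<in>I_set a n. q k > 0) \<and>
           w U lam n = (\<Sum>k\<in>I_set a n. smult (rat_to (q k)) (\<Prod>j\<le>a. ((pder ^^ j) U) ^ (k j)))"
proof -
  have a1: "1 \<le> a" using assms(2) by simp
  obtain L where L: "ev U a L = w U lam n" "\<forall>p\<in>set L. fst p \<ge> 0 \<and> snd p \<in> I_set a n"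
    "\<forall>k\<in>I_set a n. \<exists>c>0. (c, k) \<in> set L"
    using main_ind[OF assms(1) a1 assms(3) assms(5)] by blast
  have "\<forall>k\<in>I_set a n. qL L k > 0"
  proof
    fix k assume "k \<in> I_set a n"
    then obtain c where "c > 0" "(c, k) \<in> set L" using L(3) by blast
    thus "qL L k > 0" using qL_pos[of L c k] L(2) by auto
  qed
  moreover have "w U lam n = (\<Sum>k\<in>I_set a n. smult (rat_to (qL L k)) (M U a k))"
  proof -
    have "\<forall>p\<in>set L. snd p \<in> I_set a n" using L(2) by blast
    from collapse[OF assms(1) finite_I this, of U a] show ?thesis using L(1) by simp
  qed
  ultimately show ?thesis unfolding M_def by blast
qed

end
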